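(* Let $\rho:\gamma_0\to\gamma_1\to\cdots\to\gamma_r$ be a lossy execution of a broadcast protocol $P=(Q,I,M,\Delta)$ with $\gamma_r=(V,E,L)$. For every $q\in L(\gamma_r)$ and every node $v^q\in V$ with $L(v^q)=q$, there exist $s\in\mathbb{N}$ and a lossy execution $\rho':\gamma'_0\to\gamma'_1\to\cdots\to\gamma'_s$ with $\gamma'_s=(V',E',L')$ such that $|V'|=|V|+1$, and there is an injection $\iota:V\to V'$ with $L'(\iota(v))=L(v)$ for every $v\in V$, and, for the extra node $v_{new}\in V'\setminus\iota(V)$: $L'(v_{new})=q$; for every $v\in V$, $v_{new}$ and $\iota(v)$ are adjacent in $E'$ if and only if $v^q$ and $v$ are adjacent in $E$; the number of broadcasts (lost or successful) performed by $v_{new}$ along $\rho'$ equals the number of broadcasts performed by $v^q$ along $\rho$; and $v_{new}$ performs no successful broadcast along $\rho'$.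
   Context: A broadcast protocol is a tuple $P=(Q,I,M,\Delta)$ where $Q$ is a finite set of states, $I\subseteq Q$ initial states, $M$ a finite message alphabet and $\Delta\subseteq Q\times\{!!m,\ ??m \mid m\in M\}\times Q$ ($!!m$ = broadcast, $??m$ = reception). Protocols are complete for receptions: for every $q$, $m$ there is $q'$ with $(q,??m,q')\in\Delta$. A configuration is a finite undirected graph $\gamma=(V,E,L)$, $E$ symmetric irreflexive, $L:V\to Q$; $L(\gamma)=L(V)$; $\gamma$ is initial if $L(V)\subseteq I$. A lossy step goes from $\gamma=(V,E,L)$ to $\gamma'=(V,E,L')$ (same nodes and edges) if there exist a node $v$ (which broadcasts in this step) and $m\in M$ with $(L(v),!!m,L'(v))\in\Delta$ and either (a) $L'(v')=L(v')$ for all $v'\neq v$ (the broadcast is lost), or (b) for every $v'\neq v$: if $v'$ is a neighbour of $v$ then $(L(v'),??m,L'(v'))\in\Delta$, otherwise $L'(v')=L(v')$ (the broadcast is successful). A lossy execution is a sequence $\gamma_0,\dots,\gamma_r$ of configurations with $\gamma_0$ initial and consecutive lossy steps (so node set and edges are fixed). *)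

theory Defs
  imports Main
begin

datatype 'm action = Bcast 'm | Recv 'm

definition broadcast_protocol ::
  "'q set \<Rightarrow> 'q set \<Rightarrow> 'm set \<Rightarrow> ('q \<times> 'm action \<times> 'q) set \<Rightarrow> bool" where
  "broadcast_protocol Q I M Delta \<longleftrightarrow>
     finite Q \<and> finite M \<and> I \<subseteq> Q \<and>
     (\<forall>(q, a, q') \<in> Delta. q \<in> Q \<and> q' \<in> Q \<and>
        (\<exists>m \<in> M. a = Bcast m \<or> a = Recv m)) \<and>
     (\<forall>q \<in> Q. \<forall>m \<in> M. \<exists>q'. (q, Recv m, q') \<in> Delta)"

text \<open>A configuration: a finite set of nodes V, a symmetric irreflexive edge
  relation E on V, and a labelling L (only its values on V matter).\<close>
type_synonym ('v, 'q) config = "'v set \<times> ('v \<times> 'v) set \<times> ('v \<Rightarrow> 'q)"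

definition is_config :: "'q set \<Rightarrow> ('v, 'q) config \<Rightarrow> bool" where
  "is_config Q \<gamma> \<longleftrightarrow> (case \<gamma> of (V, E, L) \<Rightarrow>
     finite V \<and> E \<subseteq> V \<times> V \<and> sym E \<and> irrefl E \<and> L ` V \<subseteq> Q)"

definition initial_config :: "'q set \<Rightarrow> 'q set \<Rightarrow> ('v, 'q) config \<Rightarrow> bool" where
  "initial_config Q I \<gamma> \<longleftrightarrow> is_config Q \<gamma> \<and> (case \<gamma> of (V, E, L) \<Rightarrow> L ` V \<subseteq> I)"

text \<open>A step label (v, m, lost): node v broadcasts m; lost = True means the
  broadcast is lost, lost = False means it is successful.\<close>
type_synonym ('v, 'm) step_label = "'v \<times> 'm \<times> bool"

definition lossy_step ::
  "'m set \<Rightarrow> ('q \<times> 'm action \<times> 'q) set \<Rightarrow>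
   ('v, 'q) config \<Rightarrow> ('v, 'm) step_label \<Rightarrow> ('v, 'q) config \<Rightarrow> bool" where
  "lossy_step M Delta \<gamma> lab \<gamma>' \<longleftrightarrow>
     (case \<gamma> of (V, E, L) \<Rightarrow> case \<gamma>' of (V', E', L') \<Rightarrow> case lab of (v, m, lost) \<Rightarrow>
       V' = V \<and> E' = E \<and> v \<in> V \<and> m \<in> M \<and>
       (L v, Bcast m, L' v) \<in> Delta \<and>
       (if lost then (\<forall>u \<in> V - {v}. L' u = L u)
        else (\<forall>u \<in> V - {v}.
                (if (v, u) \<in> E then (L u, Recv m, L' u) \<in> Delta else L' u = L u))))"

definition lossy_execution ::
  "'q set \<Rightarrow> 'q set \<Rightarrow> 'm set \<Rightarrow> ('q \<times> 'm action \<times> 'q) set \<Rightarrow>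
   ('v, 'q) config list \<Rightarrow> ('v, 'm) step_label list \<Rightarrow> bool" where
  "lossy_execution Q I M Delta cs ls \<longleftrightarrow>
     length cs = length ls + 1 \<and> initial_config Q I (cs ! 0) \<and>
     (\<forall>i < length ls. lossy_step M Delta (cs ! i) (ls ! i) (cs ! Suc i))"

definition num_broadcasts :: "'v \<Rightarrow> ('v, 'm) step_label list \<Rightarrow> nat" where
  "num_broadcasts w ls = length (filter (\<lambda>(u, m, lost). u = w) ls)"

definition num_successful_broadcasts :: "'v \<Rightarrow> ('v, 'm) step_label list \<Rightarrow> nat" where
  "num_successful_broadcasts w ls = length (filter (\<lambda>(u, m, lost). u = w \<and> \<not> lost) ls)"

end

theory Submission
  imports Defs
begin

inductive reach :: "'m set \<Rightarrow> ('q \<times> 'm action \<times> 'q) set \<Rightarrow>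
   ('v, 'q) config \<Rightarrow> ('v, 'm) step_label list \<Rightarrow> ('v, 'q) config \<Rightarrow> bool"
  for M Delta where
  r0: "reach M Delta c [] c"
| rs: "lossy_step M Delta c l c1 \<Longrightarrow> reach M Delta c1 ls c2 \<Longrightarrow> reach M Delta c (l # ls) c2"

lemma reach_trans: "reach M Delta c ls1 c1 \<Longrightarrow> reach M Delta c1 ls2 c2 \<Longrightarrow> reach M Delta c (ls1 @ ls2) c2"
  by (induction rule: reach.induct) (auto intro: reach.intros)

lemma reach_VE: "reach M Delta c ls c' \<Longrightarrow> fst c' = fst c \<and> fst (snd c') = fst (snd c)"
  by (induction rule: reach.induct) (auto simp: lossy_step_def split: prod.splits)

lemma exec_reach:
  "length cs = length ls + 1 \<Longrightarrow> (\<forall>i < length ls. lossy_step M Delta (cs ! i) (ls ! i) (cs ! Suc i))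
   \<Longrightarrow> reach M Delta (cs ! 0) ls (last cs)"
proof (induction ls arbitrary: cs)
  case Nil
  then obtain c where "cs = [c]" by (cases cs) auto
  then show ?case by (auto intro: reach.intros)
next
  case (Cons l ls)
  then obtain c cs1 where cs: "cs = c # cs1" by (cases cs) auto
  with Cons.prems have len: "length cs1 = length ls + 1" by auto
  have "reach M Delta (cs1 ! 0) ls (last cs1)"
    using Cons.IH[OF len] Cons.prems(2) cs by fastforce
  moreover have "lossy_step M Delta c l (cs1 ! 0)" using Cons.prems(2) cs by fastforce
  ultimately show ?case using cs len by (auto intro: reach.intros)
qed

lemma reach_exec:
  "reach M Delta c ls c' \<Longrightarrow> \<exists>cs. length cs = length ls + 1 \<and> cs ! 0 = c \<and> last cs = c' \<and>
     (\<forall>i < length ls. lossy_step M Delta (cs ! i) (ls ! i) (cs ! Suc i))"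
proof (induction rule: reach.induct)
  case (r0 c)
  then show ?case by (intro exI[of _ "[c]"]) auto
next
  case (rs c l c1 ls c2)
  then obtain cs where cs: "length cs = length ls + 1" "cs ! 0 = c1" "last cs = c2"
     "\<forall>i < length ls. lossy_step M Delta (cs ! i) (ls ! i) (cs ! Suc i)" by blast
  show ?case
  proof (intro exI[of _ "c # cs"] conjI allI impI)
    fix i assume "i < length (l # ls)"
    then show "lossy_step M Delta ((c # cs) ! i) ((l # ls) ! i) ((c # cs) ! Suc i)"
      using cs rs(1) by (cases i) auto
  qed (use cs in auto)
qed

definition lift :: "'v \<Rightarrow> ('v, 'q) config \<Rightarrow> ('v option, 'q) config" where
  "lift vq c = (case c of (V, E, L) \<Rightarrow> (insert None (Some ` V),
     (\<lambda>(a, b). (Some a, Some b)) ` E \<union> (\<lambda>v. (None, Some v)) ` {v. (vq, v) \<in> E}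
       \<union> (\<lambda>v. (Some v, None)) ` {v. (vq, v) \<in> E}, case_option (L vq) L))"

lemma lift_mem_simps[simp]:
  "((Some a, Some b) \<in> (\<lambda>(a, b). (Some a, Some b)) ` E) = ((a, b) \<in> E)"
  "((None, x) \<in> (\<lambda>(a, b). (Some a, Some b)) ` E) = False"
  "((x, None) \<in> (\<lambda>(a, b). (Some a, Some b)) ` E) = False"
  "((Some a, x) \<in> (\<lambda>v. (None, Some v)) ` S) = False"
  "((None, x) \<in> (\<lambda>v. (None, Some v)) ` S) = (\<exists>b. x = Some b \<and> b \<in> S)"
  "((x, Some a) \<in> (\<lambda>v. (Some v, None)) ` S) = False"
  "((x, None) \<in> (\<lambda>v. (Some v, None)) ` S) = (\<exists>b. x = Some b \<and> b \<in> S)"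
  by auto

lemma sim:
  assumes "reach M Delta c ls c'" "fst c = V" "fst (snd c) = E" "vq \<in> V" "sym E" "irrefl E"
  shows "\<exists>ls'. reach M Delta (lift vq c) ls' (lift vq c') \<and>
     num_broadcasts None ls' = num_broadcasts vq ls \<and> num_successful_broadcasts None ls' = 0"
  using assms
proof (induction rule: reach.induct)
  case (r0 c)
  then show ?case by (intro exI[of _ "[]"]) (auto intro: reach.intros simp: num_broadcasts_def num_successful_broadcasts_def)
next
  case (rs c l c1 ls c2)
  obtain L where c: "c = (V, E, L)" using rs.prems by (cases c) auto
  obtain v m lost where l: "l = (v, m, lost)" by (cases l) auto
  obtain L1 where c1: "c1 = (V, E, L1)" using rs(1) c by (cases c1) (auto simp: lossy_step_def)
  from rs.IH c1 rs.prems obtain ls' where ih: "reach M Delta (lift vq c1) ls' (lift vq c2)"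
     "num_broadcasts None ls' = num_broadcasts vq ls" "num_successful_broadcasts None ls' = 0" by auto
  have st: "v \<in> V" "m \<in> M" "(L v, Bcast m, L1 v) \<in> Delta"
    "lost \<Longrightarrow> \<forall>u \<in> V - {v}. L1 u = L u"
    "\<not> lost \<Longrightarrow> \<forall>u \<in> V - {v}. (if (v, u) \<in> E then (L u, Recv m, L1 u) \<in> Delta else L1 u = L u)"
    using rs(1) unfolding c c1 l lossy_step_def by (auto split: if_splits)
  have noloop: "(x, x) \<notin> E" for x using rs.prems(5) by (auto simp: irrefl_def)
  have symE: "(a, b) \<in> E \<Longrightarrow> (b, a) \<in> E" for a b using rs.prems(4) by (auto simp: sym_def)
  show ?case
  proof (cases "v = vq")
    case True
    define X where
      "X = (fst (lift vq c), fst (snd (lift vq c)), case_option (L vq) L1)"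
    have s1: "lossy_step M Delta (lift vq c) (Some v, m, lost) X"
      using st True noloop unfolding X_def lift_def c lossy_step_def
      by (auto split: if_splits option.splits)
    have s2: "lossy_step M Delta X (None, m, True) (lift vq c1)"
      using st True noloop unfolding X_def lift_def c c1 lossy_step_def
      by (auto split: if_splits option.splits)
    have "reach M Delta (lift vq c) ([(Some v, m, lost), (None, m, True)] @ ls') (lift vq c2)"
      using s1 s2 ih(1) by (auto intro: reach.intros)
    then show ?thesis using ih True l
      by (intro exI[of _ "[(Some v, m, lost), (None, m, True)] @ ls'"])
         (auto simp: num_broadcasts_def num_successful_broadcasts_def)
  next
    case False
    have s1: "lossy_step M Delta (lift vq c) (Some v, m, lost) (lift vq c1)"
    proof (cases lost)
      case True
      then show ?thesis using st False rs.prems(3) unfolding lift_def c c1 lossy_step_def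
        by (auto split: option.splits)
    next
      case nl: False
      have "(if (v, vq) \<in> E then (L vq, Recv m, L1 vq) \<in> Delta else L1 vq = L vq)"
        using st(5)[OF nl] False rs.prems(3) by auto
      then show ?thesis using st(1-3) st(5)[OF nl] nl False rs.prems(3) symE
        unfolding lift_def c c1 lossy_step_def
        by (auto split: option.splits if_splits)
    qed
    have "reach M Delta (lift vq c) ((Some v, m, lost) # ls') (lift vq c2)"
      using s1 ih(1) by (auto intro: reach.intros)
    then show ?thesis using ih False l
      by (intro exI[of _ "(Some v, m, lost) # ls'"])
         (auto simp: num_broadcasts_def num_successful_broadcasts_def)
  qed
qed

theorem proposition3p6:
  fixes Q I :: "'q set" and M :: "'m set" and Delta :: "('q \<times> 'm action \<times> 'q) set"
    and cs :: "('v, 'q) config list" and ls :: "('v, 'm) step_label list"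
    and V :: "'v set" and E :: "('v \<times> 'v) set" and L :: "'v \<Rightarrow> 'q"
    and q :: 'q and vq :: 'v
  assumes "broadcast_protocol Q I M Delta"
    and "lossy_execution Q I M Delta cs ls"
    and "last cs = (V, E, L)"
    and "q \<in> L ` V"
    and "vq \<in> V" and "L vq = q"
  shows "\<exists>(cs' :: ('v option, 'q) config list) (ls' :: ('v option, 'm) step_label list)
           V' E' L' \<iota> vnew.
           lossy_execution Q I M Delta cs' ls' \<and> last cs' = (V', E', L') \<and>
           card V' = card V + 1 \<and>
           inj_on \<iota> V \<and> \<iota> ` V \<subseteq> V' \<and> (\<forall>v \<in> V. L' (\<iota> v) = L v) \<and>
           vnew \<in> V' - \<iota> ` V \<and> L' vnew = q \<and>
           (\<forall>v \<in> V. ((vnew, \<iota> v) \<in> E' \<longleftrightarrow> (vq, v) \<in> E)) \<and>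
           num_broadcasts vnew ls' = num_broadcasts vq ls \<and>
           num_successful_broadcasts vnew ls' = 0"
proof -
  have ex: "length cs = length ls + 1" "initial_config Q I (cs ! 0)"
    "\<forall>i < length ls. lossy_step M Delta (cs ! i) (ls ! i) (cs ! Suc i)"
    using assms(2) unfolding lossy_execution_def by auto
  have r: "reach M Delta (cs ! 0) ls (last cs)" using exec_reach ex(1,3) by blast
  obtain L0 where c0: "cs ! 0 = (V, E, L0)"
    using reach_VE[OF r] assms(3) by (cases "cs ! 0") auto
  have ic: "finite V" "E \<subseteq> V \<times> V" "sym E" "irrefl E" "L0 ` V \<subseteq> I"
    using ex(2) unfolding c0 initial_config_def is_config_def by auto
  have IQ: "I \<subseteq> Q" using assms(1) unfolding broadcast_protocol_def by auto
  obtain ls' where s: "reach M Delta (lift vq (cs ! 0)) ls' (lift vq (last cs))"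
    "num_broadcasts None ls' = num_broadcasts vq ls" "num_successful_broadcasts None ls' = 0"
    using sim[OF r, of V E vq] c0 ic assms(5) by auto
  obtain cs' where cs': "length cs' = length ls' + 1" "cs' ! 0 = lift vq (cs ! 0)"
    "last cs' = lift vq (last cs)"
    "\<forall>i < length ls'. lossy_step M Delta (cs' ! i) (ls' ! i) (cs' ! Suc i)"
    using reach_exec[OF s(1)] by blast
  have init: "initial_config Q I (lift vq (cs ! 0))"
    using ic IQ assms(5) unfolding c0 lift_def initial_config_def is_config_def
    by (auto simp: sym_def irrefl_def split: option.splits; blast)
  have le: "lossy_execution Q I M Delta cs' ls'"
    unfolding lossy_execution_def using cs' init by auto
  show ?thesis
    apply (rule exI[of _ cs'], rule exI[of _ ls'])
    apply (rule exI[of _ "fst (lift vq (V, E, L))"], rule exI[of _ "fst (snd (lift vq (V, E, L)))"],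
           rule exI[of _ "snd (snd (lift vq (V, E, L)))"], rule exI[of _ Some], rule exI[of _ None])
    using le cs'(3) assms(3,5,6) s(2,3) ic(1)
    by (auto simp: lift_def card_image)
qed

end
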